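(* Assume (A1)–(A4), let $0\le\upsilon\le\sigma/2$ with $\upsilon<\sigma_\lambda$, let $\eta<\frac1{4B}$ and $\delta=4B^2$, and let $(x_t,\lambda_t)$ be generated by CSOA. Then for every $T\ge1$ and every $\lambda\in\mathbb R^N_+$, $$\sum_{t=1}^T\mathbb E\big[F(x_t)-F(x^\star_\upsilon)\big]-\Big(2B^2\eta T+\frac1{2\eta}\Big)\|\lambda\|^2+\sum_{t=1}^T\mathbb E\big[\langle\lambda,\mathbf H(x_t)+\upsilon\mathbf 1\rangle\big]\le\frac{D^2}{2\eta}+P\eta T,$$ where $P:=B^2+4N\sigma_\lambda^2$ and $B=\max(\sigma_f,\sigma_h\sqrt N)$.
   Context: Setting: $\mathcal X\subseteq\mathbb R^m$ nonempty convex compact; $\theta$ a random vector; $f,h_1,\dots,h_N$ proper, closed, convex and differentiable in $x$; $F(x)=\mathbb E f(x,\theta)$, $H_i(x)=\mathbb E h_i(x,\theta)$, $\mathbf H=(H_i)_i$, $\mathbf 1$ all-ones vector. For $\upsilon\ge0$, $x^\star_\upsilon$ denotes an optimal solution of the conservative problem $\min_{x\in\mathcal X}F(x)$ s.t. $H_i(x)+\upsilon\le0$ for all $i$. For $\eta,\delta>0$, $\hat{\mathcal L}(x,\lambda,\theta)=f(x,\theta)+\sum_i\lambda_i(h_i(x,\theta)+\upsilon)-\frac{\delta\eta}2\|\lambda\|^2$. $\theta_1,\theta_2,\dots$ i.i.d. copies of $\theta$; expectations are over all of them. CSOA: $x_1\in\mathcal X$ arbitrary, $\lambda_1=0$; $x_{t+1}=P_{\mathcal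 X}[x_t-\eta\nabla_x\hat{\mathcal L}(x_t,\lambda_t,\theta_t)]$, $\lambda_{i,t+1}=[(1-\eta^2\delta)\lambda_{i,t}+\eta(h_i(x_t,\theta_t)+\upsilon)]_+$ ($P_{\mathcal X}$ Euclidean projection, $[\cdot]_+$ positive part). (A1) $\mathbb E\|\nabla f(x,\theta)\|^2\le\sigma_f^2$, $\mathbb E\|\nabla h_i(x,\theta)\|^2\le\sigma_h^2$ on $\mathcal X$. (A2) $\mathbb E[h_i(x,\theta)^2]\le\sigma_\lambda^2$ on $\mathcal X$. (A3) $\mathrm{diam}(\mathcal X)\le D$ and $\mathcal X\subset\mathrm{relint}(\mathrm{dom}f\cap\bigcap_i\mathrm{dom}h_i)$. (A4) There are $\tilde x\in\mathcal X$, $\sigma>0$ with $H_i(\tilde x)+\sigma\le0$ for all $i$. *)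

theory Defs
  imports "HOL-Probability.Probability"
begin

definition expfun :: "'b measure \<Rightarrow> ('a \<Rightarrow> 'b \<Rightarrow> real) \<Rightarrow> 'a \<Rightarrow> real" where
  "expfun Th g x = (\<integral>th. g x th \<partial>Th)"

text \<open>Index shift: csoa ... t = (x_(t+1), lambda_(t+1)),
  and the sample used in step t (0-based) is ths t (= theta_(t+1) in the paper).
  The gradient of the regularised Lagrangian in x is gf x th + sum_i lambda_i gh i x th.\<close>
primrec csoa ::
  "'a::euclidean_space set \<Rightarrow> ('a \<Rightarrow> 'b \<Rightarrow> 'a) \<Rightarrow> ('i::finite \<Rightarrow> 'a \<Rightarrow> 'b \<Rightarrow> real)
   \<Rightarrow> ('i \<Rightarrow> 'a \<Rightarrow> 'b \<Rightarrow> 'a) \<Rightarrow> real \<Rightarrow> real \<Rightarrow> real \<Rightarrow> 'a \<Rightarrow> (nat \<Rightarrow> 'b) \<Rightarrow> nat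
   \<Rightarrow> 'a \<times> (real^'i)" where
  "csoa X gf h gh \<eta> \<delta> \<upsilon> x1 ths 0 = (x1, 0)"
| "csoa X gf h gh \<eta> \<delta> \<upsilon> x1 ths (Suc t) =
     (let (x, l) = csoa X gf h gh \<eta> \<delta> \<upsilon> x1 ths t; th = ths t in
       (closest_point X (x - \<eta> *\<^sub>R (gf x th + (\<Sum>i\<in>UNIV. (l $ i) *\<^sub>R gh i x th))),
        \<chi> i. max 0 ((1 - \<eta>\<^sup>2 * \<delta>) * (l $ i) + \<eta> * (h i x th + \<upsilon>))))"

end

theory Submission
  imports Defs
begin


lemma convex_grad_ineq:
  fixes g :: "'a::real_normed_vector \<Rightarrow> real" and gg :: "'a \<Rightarrow> real"
  assumes cv: "convex_on X g" and X: "convex X" and x: "x \<in> X" and y: "y \<in> X"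
    and d: "(g has_derivative gg) (at x)" and lin: "linear gg"
  shows "g x + gg (y - x) \<le> g y"
proof -
  define \<phi> where "\<phi> s = g (x + s *\<^sub>R (y - x))" for s :: real
  have h1: "((\<lambda>s::real. x + s *\<^sub>R (y - x)) has_derivative (\<lambda>s. s *\<^sub>R (y - x))) (at 0)"
    by (auto intro!: derivative_eq_intros)
  have h2: "(g has_derivative gg) (at (x + 0 *\<^sub>R (y - x)))" using d by simp
  have "(\<phi> has_derivative (\<lambda>s. gg (s *\<^sub>R (y - x)))) (at 0)"
    unfolding \<phi>_def using has_derivative_compose[OF h1 h2] by simp
  moreover have "(\<lambda>s. gg (s *\<^sub>R (y - x))) = (*) (gg (y - x))"
    using lin by (auto simp add: linear_scale)
  ultimately have "(\<phi> has_field_derivative gg (y - x)) (at 0)"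
    by (simp add: has_field_derivative_def)
  then have lim: "((\<lambda>s. (\<phi> s - \<phi> 0) / (s - 0)) \<longlongrightarrow> gg (y - x)) (at 0 within {0<..})"
    unfolding has_field_derivative_iff by (blast intro: tendsto_mono at_le)
  have ev: "eventually (\<lambda>s. (\<phi> s - \<phi> 0) / (s - 0) \<le> g y - g x) (at 0 within {0<..})"
  proof -
    have "eventually (\<lambda>s. s \<in> {0<..<1}) (at_right (0::real))"
      by (rule eventually_at_right_real) simp
    then show ?thesis
    proof (rule eventually_mono)
      fix s :: real assume s: "s \<in> {0<..<1}"
      have "g ((1 - s) *\<^sub>R x + s *\<^sub>R y) \<le> (1 - s) * g x + s * g y"
        using s x y cv by (intro convex_onD) auto
      moreover have "(1 - s) *\<^sub>R x + s *\<^sub>R y = x + s *\<^sub>R (y - x)"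
        by (simp add: algebra_simps)
      ultimately have "\<phi> s \<le> g x + s * (g y - g x)" unfolding \<phi>_def by (simp add: algebra_simps)
      then show "(\<phi> s - \<phi> 0) / (s - 0) \<le> g y - g x"
        using s by (simp add: \<phi>_def field_simps)
    qed
  qed
  have "gg (y - x) \<le> g y - g x"
    by (rule tendsto_upperbound[OF lim ev]) (simp add: trivial_limit_at_right_real)
  then show ?thesis by simp
qed




definition stp :: "'a::euclidean_space set \<Rightarrow> ('a \<Rightarrow> 'b \<Rightarrow> 'a) \<Rightarrow> ('i::finite \<Rightarrow> 'a \<Rightarrow> 'b \<Rightarrow> real)
   \<Rightarrow> ('i \<Rightarrow> 'a \<Rightarrow> 'b \<Rightarrow> 'a) \<Rightarrow> real \<Rightarrow> real \<Rightarrow> real \<Rightarrow> 'a \<times> (real^'i) \<Rightarrow> 'b \<Rightarrow> 'a \<times> (real^'i)" where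
  "stp X gf h gh \<eta> \<delta> \<upsilon> z th =
     (closest_point X (fst z - \<eta> *\<^sub>R (gf (fst z) th + (\<Sum>i\<in>UNIV. (snd z $ i) *\<^sub>R gh i (fst z) th))),
      \<chi> i. max 0 ((1 - \<eta>\<^sup>2 * \<delta>) * (snd z $ i) + \<eta> * (h i (fst z) th + \<upsilon>)))"

lemma csoa_Suc':
  "csoa X gf h gh \<eta> \<delta> \<upsilon> x1 ths (Suc t) = stp X gf h gh \<eta> \<delta> \<upsilon> (csoa X gf h gh \<eta> \<delta> \<upsilon> x1 ths t) (ths t)"
  by (simp add: stp_def split_beta Let_def)

lemma csoa_cong:
  "(\<And>k. k < t \<Longrightarrow> ths k = ths' k) \<Longrightarrow>
     csoa X gf h gh \<eta> \<delta> \<upsilon> x1 ths t = csoa X gf h gh \<eta> \<delta> \<upsilon> x1 ths' t"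
proof (induction t)
  case 0 then show ?case by simp
next
  case (Suc t)
  then have "csoa X gf h gh \<eta> \<delta> \<upsilon> x1 ths t = csoa X gf h gh \<eta> \<delta> \<upsilon> x1 ths' t" by simp
  moreover have "ths t = ths' t" using Suc by simp
  ultimately show ?case by (simp add: csoa_Suc')
qed

lemma csoa_in:
  assumes "closed X" "X \<noteq> {}"
  shows "fst (csoa X gf h gh \<eta> \<delta> \<upsilon> x1 ths (Suc t)) \<in> X"
    "0 \<le> snd (csoa X gf h gh \<eta> \<delta> \<upsilon> x1 ths t) $ i"
proof -
  show "fst (csoa X gf h gh \<eta> \<delta> \<upsilon> x1 ths (Suc t)) \<in> X"
    by (simp del: csoa.simps add: csoa_Suc' stp_def closest_point_in_set assms)
  show "0 \<le> snd (csoa X gf h gh \<eta> \<delta> \<upsilon> x1 ths t) $ i"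
    by (cases t) (simp_all del: csoa.simps(2) add: csoa_Suc' stp_def)
qed

lemma csoa_in_X:
  assumes "closed X" "X \<noteq> {}" "x1 \<in> X"
  shows "fst (csoa X gf h gh \<eta> \<delta> \<upsilon> x1 ths t) \<in> X"
  using csoa_in(1)[OF assms(1,2)] assms(3) by (cases t) auto

lemma nn_integral_distr':
  "T \<in> measurable M M' \<Longrightarrow> f \<in> borel_measurable M' \<Longrightarrow>
    integral\<^sup>N (distr M M' T) f = (\<integral>\<^sup>+x. f (T x) \<partial>M)"
  by (rule nn_integral_distr) simp_all

lemma meas_fst_borel: "fst \<in> borel_measurable (borel :: ('a::topological_space \<times> 'c::topological_space) measure)"
  by (intro borel_measurable_continuous_onI continuous_on_fst continuous_on_id)

lemma meas_snd_borel: "snd \<in> borel_measurable (borel :: ('a::topological_space \<times> 'c::topological_space) measure)"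
  by (intro borel_measurable_continuous_onI continuous_on_snd continuous_on_id)

lemma meas_sec:
  fixes G :: "'a::euclidean_space \<Rightarrow> 'b \<Rightarrow> 'c::topological_space"
  assumes "(\<lambda>q. G (fst q) (snd q)) \<in> borel_measurable (borel \<Otimes>\<^sub>M Th)"
  shows "(\<lambda>p. G (fst (fst p)) (snd p)) \<in> borel_measurable ((borel :: ('a \<times> 'd::euclidean_space) measure) \<Otimes>\<^sub>M Th)"
proof -
  have "(\<lambda>p. (fst (fst p), snd p)) \<in> measurable ((borel :: ('a \<times> 'd) measure) \<Otimes>\<^sub>M Th) (borel \<Otimes>\<^sub>M Th)"
    by (intro measurable_Pair measurable_compose[OF measurable_fst meas_fst_borel] measurable_snd)
  from measurable_compose[OF this assms] show ?thesis by simp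
qed

lemma vec_comp_meas:
  fixes u :: "'x \<Rightarrow> real^'i::finite"
  assumes "u \<in> borel_measurable N"
  shows "(\<lambda>p. u p $ i) \<in> borel_measurable N"
proof -
  have "(\<lambda>p. u p \<bullet> axis i 1) \<in> borel_measurable N" using assms by measurable
  then show ?thesis by (simp add: inner_axis)
qed

lemma vec_lambda_meas:
  fixes u :: "'i::finite \<Rightarrow> 'x \<Rightarrow> real"
  assumes "\<And>i. u i \<in> borel_measurable N"
  shows "(\<lambda>p. (\<chi> i. u i p)) \<in> borel_measurable N"
proof (subst borel_measurable_euclidean_space, intro ballI)
  fix b :: "real^'i" assume "b \<in> Basis"
  then obtain i where b: "b = axis i 1" by (auto simp: Basis_vec_def)
  show "(\<lambda>p. (\<chi> i. u i p) \<bullet> b) \<in> borel_measurable N"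
    using assms by (simp add: b inner_axis)
qed

lemma stp_meas:
  fixes X :: "'a::euclidean_space set" and h :: "'i::finite \<Rightarrow> 'a \<Rightarrow> 'b \<Rightarrow> real"
  assumes X: "convex X" "closed X" "X \<noteq> {}"
   and gf_meas: "(\<lambda>p. gf (fst p) (snd p)) \<in> borel_measurable (borel \<Otimes>\<^sub>M Th)"
   and h_meas: "\<And>i. (\<lambda>p. h i (fst p) (snd p)) \<in> borel_measurable (borel \<Otimes>\<^sub>M Th)"
   and gh_meas: "\<And>i. (\<lambda>p. gh i (fst p) (snd p)) \<in> borel_measurable (borel \<Otimes>\<^sub>M Th)"
  shows "(\<lambda>p. stp X gf h gh \<eta> \<delta> \<upsilon> (fst p) (snd p)) \<in> borel_measurable (borel \<Otimes>\<^sub>M Th)"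
proof -
  let ?N = "(borel :: ('a \<times> (real^'i)) measure) \<Otimes>\<^sub>M Th"
  have m1: "(\<lambda>p. fst (fst p)) \<in> borel_measurable ?N"
    by (intro measurable_compose[OF measurable_fst meas_fst_borel])
  have m2: "(\<lambda>p. snd (fst p)) \<in> borel_measurable ?N"
    by (intro measurable_compose[OF measurable_fst meas_snd_borel])
  have m2i: "(\<lambda>p. snd (fst p) $ i) \<in> borel_measurable ?N" for i
    by (rule vec_comp_meas[OF m2])
  have mgf: "(\<lambda>p. gf (fst (fst p)) (snd p)) \<in> borel_measurable ?N" by (rule meas_sec[OF gf_meas])
  have mh: "(\<lambda>p. h i (fst (fst p)) (snd p)) \<in> borel_measurable ?N" for i by (rule meas_sec[OF h_meas])
  have mgh: "(\<lambda>p. gh i (fst (fst p)) (snd p)) \<in> borel_measurable ?N" for i by (rule meas_sec[OF gh_meas])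
  have cp: "closest_point X \<in> borel_measurable borel"
    by (intro borel_measurable_continuous_onI continuous_on_closest_point X)
  have a: "(\<lambda>p. fst (fst p) - \<eta> *\<^sub>R (gf (fst (fst p)) (snd p) + (\<Sum>i\<in>UNIV. (snd (fst p) $ i) *\<^sub>R gh i (fst (fst p)) (snd p)))) \<in> borel_measurable ?N"
    using m1 m2i mgf mgh by measurable
  have b: "(\<lambda>p. (\<chi> i. max 0 ((1 - \<eta>\<^sup>2 * \<delta>) * (snd (fst p) $ i) + \<eta> * (h i (fst (fst p)) (snd p) + \<upsilon>)))) \<in> borel_measurable ?N"
    by (rule vec_lambda_meas) (use m2i mh in measurable)
  show ?thesis unfolding stp_def
    by (intro borel_measurable_Pair measurable_compose[OF a cp] b)
qed




locale setting =
  fixes X :: "'a::euclidean_space set"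
    and M :: "'w measure" and Th :: "'b measure" and \<theta> :: "nat \<Rightarrow> 'w \<Rightarrow> 'b"
    and f :: "'a \<Rightarrow> 'b \<Rightarrow> real" and gf :: "'a \<Rightarrow> 'b \<Rightarrow> 'a"
    and h :: "'i::finite \<Rightarrow> 'a \<Rightarrow> 'b \<Rightarrow> real" and gh :: "'i \<Rightarrow> 'a \<Rightarrow> 'b \<Rightarrow> 'a"
    and \<sigma>f \<sigma>h \<sigma>l D \<upsilon> \<eta> \<delta> B P :: real
    and xstar x1 :: 'a and lam :: "real^'i"
  assumes X: "compact X" "convex X" "X \<noteq> {}"
    and M: "prob_space M"
    and \<theta>_meas: "\<And>t. \<theta> t \<in> measurable M Th"
    and \<theta>_indep: "prob_space.indep_vars M (\<lambda>_. Th) \<theta> UNIV"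
    and \<theta>_distr: "\<And>t. distr M Th (\<theta> t) = Th"
    and f_conv: "\<And>th. th \<in> space Th \<Longrightarrow> convex_on X (\<lambda>x. f x th)"
    and f_diff: "\<And>th x. th \<in> space Th \<Longrightarrow> x \<in> X \<Longrightarrow>
                   ((\<lambda>y. f y th) has_derivative (\<lambda>v. gf x th \<bullet> v)) (at x)"
    and h_conv: "\<And>i th. th \<in> space Th \<Longrightarrow> convex_on X (\<lambda>x. h i x th)"
    and h_diff: "\<And>i th x. th \<in> space Th \<Longrightarrow> x \<in> X \<Longrightarrow>
                   ((\<lambda>y. h i y th) has_derivative (\<lambda>v. gh i x th \<bullet> v)) (at x)"
    and f_meas: "(\<lambda>p. f (fst p) (snd p)) \<in> borel_measurable (borel \<Otimes>\<^sub>M Th)"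
    and gf_meas: "(\<lambda>p. gf (fst p) (snd p)) \<in> borel_measurable (borel \<Otimes>\<^sub>M Th)"
    and h_meas: "\<And>i. (\<lambda>p. h i (fst p) (snd p)) \<in> borel_measurable (borel \<Otimes>\<^sub>M Th)"
    and gh_meas: "\<And>i. (\<lambda>p. gh i (fst p) (snd p)) \<in> borel_measurable (borel \<Otimes>\<^sub>M Th)"
    and f_int: "\<And>x. x \<in> X \<Longrightarrow> integrable Th (f x)"
    and \<sigma>_nonneg: "\<sigma>f \<ge> 0" "\<sigma>h \<ge> 0" "\<sigma>l \<ge> 0"
    and A1f: "\<And>x. x \<in> X \<Longrightarrow> (\<integral>\<^sup>+ th. ennreal ((norm (gf x th))\<^sup>2) \<partial>Th) \<le> ennreal (\<sigma>f\<^sup>2)"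
    and A1h: "\<And>i x. x \<in> X \<Longrightarrow> (\<integral>\<^sup>+ th. ennreal ((norm (gh i x th))\<^sup>2) \<partial>Th) \<le> ennreal (\<sigma>h\<^sup>2)"
    and A2: "\<And>i x. x \<in> X \<Longrightarrow> (\<integral>\<^sup>+ th. ennreal ((h i x th)\<^sup>2) \<partial>Th) \<le> ennreal (\<sigma>l\<^sup>2)"
    and A3: "\<And>x y. x \<in> X \<Longrightarrow> y \<in> X \<Longrightarrow> dist x y \<le> D"
    and \<upsilon>: "0 \<le> \<upsilon>" "\<upsilon> < \<sigma>l"
    and B_def: "B = max \<sigma>f (\<sigma>h * sqrt (real CARD('i)))"
    and P_def: "P = B\<^sup>2 + 4 * real CARD('i) * \<sigma>l\<^sup>2"
    and \<eta>: "\<eta> > 0" "\<eta> < 1 / (4 * B)"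
    and \<delta>_def: "\<delta> = 4 * B\<^sup>2"
    and x1: "x1 \<in> X"
    and xstar: "xstar \<in> X" "\<And>i. expfun Th (h i) xstar + \<upsilon> \<le> 0"
    and lam: "\<And>i. lam $ i \<ge> 0"
begin

definition Z where "Z t \<omega> = csoa X gf h gh \<eta> \<delta> \<upsilon> x1 (\<lambda>k. \<theta> k \<omega>) t"

lemma Xclosed: "closed X" using X compact_imp_closed by blast

lemma Th_prob: "prob_space Th"
  using prob_space.prob_space_distr[OF M \<theta>_meas[of 0]] \<theta>_distr[of 0] by simp

lemma Th_sf: "sigma_finite_measure Th"
  using Th_prob prob_space_imp_sigma_finite by blast

lemma Phi_meas: "t \<le> n \<Longrightarrow> (\<lambda>r. csoa X gf h gh \<eta> \<delta> \<upsilon> x1 r t) \<in> borel_measurable (PiM {..<n} (\<lambda>_. Th))"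
proof (induction t)
  case 0 then show ?case by simp
next
  case (Suc t)
  have IH: "(\<lambda>r. csoa X gf h gh \<eta> \<delta> \<upsilon> x1 r t) \<in> borel_measurable (PiM {..<n} (\<lambda>_. Th))"
    using Suc by simp
  have c: "(\<lambda>r. r t) \<in> measurable (PiM {..<n} (\<lambda>_. Th)) Th"
    using Suc by (intro measurable_component_singleton) auto
  have "(\<lambda>r. (csoa X gf h gh \<eta> \<delta> \<upsilon> x1 r t, r t)) \<in> measurable (PiM {..<n} (\<lambda>_. Th)) (borel \<Otimes>\<^sub>M Th)"
    by (intro measurable_Pair IH c)
  from measurable_compose[OF this stp_meas[OF X(2) Xclosed X(3) gf_meas h_meas gh_meas]]
  show ?case by (simp add: csoa_Suc' del: csoa.simps(2))
qed

lemma Z_restrict: "Z t = (\<lambda>r. csoa X gf h gh \<eta> \<delta> \<upsilon> x1 r t) \<circ> (\<lambda>\<omega>. restrict (\<lambda>k. \<theta> k \<omega>) {..<t})"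
  unfolding Z_def by (rule ext) (simp, rule csoa_cong, simp)

lemma Z_meas: "Z t \<in> borel_measurable M"
proof -
  have "(\<lambda>\<omega>. restrict (\<lambda>k. \<theta> k \<omega>) {..<t}) \<in> measurable M (PiM {..<t} (\<lambda>_. Th))"
    by (intro measurable_restrict \<theta>_meas)
  from measurable_comp[OF this Phi_meas[OF order_refl]] show ?thesis
    by (simp add: Z_restrict)
qed

lemma Z_in: "fst (Z t \<omega>) \<in> X" "0 \<le> snd (Z t \<omega>) $ i"
  unfolding Z_def by (simp_all add: csoa_in_X[OF Xclosed X(3) x1] csoa_in(2)[OF Xclosed X(3)])

lemma E_indep:
  assumes G: "G \<in> borel_measurable ((borel :: ('a \<times> (real^'i)) measure) \<Otimes>\<^sub>M Th)"
  shows "(\<integral>\<^sup>+\<omega>. G (Z t \<omega>, \<theta> t \<omega>) \<partial>M) = (\<integral>\<^sup>+\<omega>. (\<integral>\<^sup>+th. G (Z t \<omega>, th) \<partial>Th) \<partial>M)"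
proof -
  interpret PM: prob_space M by (rule M)
  let ?S = "PiM {..<t} (\<lambda>_. Th)" and ?T = "PiM {t} (\<lambda>_. Th)"
  let ?X1 = "\<lambda>\<omega>. restrict (\<lambda>k. \<theta> k \<omega>) {..<t}" and ?X2 = "\<lambda>\<omega>. restrict (\<lambda>k. \<theta> k \<omega>) {t}"
  let ?\<Phi> = "\<lambda>r. csoa X gf h gh \<eta> \<delta> \<upsilon> x1 r t"
  define G' where "G' p = G (?\<Phi> (fst p), snd p t)" for p
  have ind: "PM.indep_var ?S ?X1 ?T ?X2"
    by (rule PM.indep_var_restrict[OF \<theta>_indep]) auto
  have m1: "?X1 \<in> measurable M ?S" by (intro measurable_restrict \<theta>_meas)
  have m2: "?X2 \<in> measurable M ?T" by (intro measurable_restrict \<theta>_meas)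
  interpret P2: prob_space "distr M ?T ?X2" by (rule PM.prob_space_distr[OF m2])
  have J: "distr M ?S ?X1 \<Otimes>\<^sub>M distr M ?T ?X2 = distr M (?S \<Otimes>\<^sub>M ?T) (\<lambda>\<omega>. (?X1 \<omega>, ?X2 \<omega>))"
    using ind unfolding PM.indep_var_distribution_eq by simp
  have pm: "(\<lambda>\<omega>. (?X1 \<omega>, ?X2 \<omega>)) \<in> measurable M (?S \<Otimes>\<^sub>M ?T)"
    by (intro measurable_Pair m1 m2)
  have c: "(\<lambda>r. r t) \<in> measurable ?T Th"
    by (intro measurable_component_singleton) auto
  have inner: "(\<lambda>p. (?\<Phi> (fst p), snd p t)) \<in> measurable (?S \<Otimes>\<^sub>M ?T) (borel \<Otimes>\<^sub>M Th)"
    by (intro measurable_Pair measurable_compose[OF measurable_fst Phi_meas[OF order_refl]]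
          measurable_compose[OF measurable_snd c])
  have G'm: "G' \<in> borel_measurable (?S \<Otimes>\<^sub>M ?T)"
    unfolding G'_def using measurable_compose[OF inner G] by simp
  have G'm2: "G' \<in> borel_measurable (distr M ?S ?X1 \<Otimes>\<^sub>M distr M ?T ?X2)"
    using G'm by (subst measurable_cong_sets[OF sets_pair_measure_cong[OF sets_distr sets_distr] refl])
  have W: "(\<lambda>r. \<integral>\<^sup>+s. G' (r, s) \<partial>distr M ?T ?X2) \<in> borel_measurable ?S"
    using P2.borel_measurable_nn_integral[of "\<lambda>r s. G' (r, s)" ?S] G'm
    by (simp add: measurable_cong_sets[OF sets_pair_measure_cong[OF refl sets_distr] refl])
  have inner_eq: "(\<integral>\<^sup>+s. G' (r, s) \<partial>distr M ?T ?X2) = (\<integral>\<^sup>+th. G (?\<Phi> r, th) \<partial>Th)" if r: "r \<in> space ?S" for r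
  proof -
    have Gr: "(\<lambda>th. G (?\<Phi> r, th)) \<in> borel_measurable Th"
      using measurable_Pair2[OF G, of "?\<Phi> r"] by simp
    have Gs: "(\<lambda>s. G' (r, s)) \<in> borel_measurable ?T"
      unfolding G'_def using measurable_compose[OF c Gr] by simp
    have "(\<integral>\<^sup>+s. G' (r, s) \<partial>distr M ?T ?X2) = (\<integral>\<^sup>+\<omega>. G' (r, ?X2 \<omega>) \<partial>M)"
      using nn_integral_distr'[OF m2 Gs] by simp
    also have "\<dots> = (\<integral>\<^sup>+\<omega>. G (?\<Phi> r, \<theta> t \<omega>) \<partial>M)" by (simp add: G'_def)
    also have "\<dots> = (\<integral>\<^sup>+th. G (?\<Phi> r, th) \<partial>distr M Th (\<theta> t))"
      by (rule nn_integral_distr'[symmetric, OF \<theta>_meas Gr])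
    finally show ?thesis using \<theta>_distr[of t] by simp
  qed
  have "(\<integral>\<^sup>+\<omega>. G (Z t \<omega>, \<theta> t \<omega>) \<partial>M) = (\<integral>\<^sup>+\<omega>. G' (?X1 \<omega>, ?X2 \<omega>) \<partial>M)"
    by (simp add: G'_def Z_restrict)
  also have "\<dots> = integral\<^sup>N (distr M (?S \<Otimes>\<^sub>M ?T) (\<lambda>\<omega>. (?X1 \<omega>, ?X2 \<omega>))) G'"
    by (rule nn_integral_distr'[symmetric, OF pm G'm])
  also have "\<dots> = integral\<^sup>N (distr M ?S ?X1 \<Otimes>\<^sub>M distr M ?T ?X2) G'" by (simp add: J)
  also have "\<dots> = (\<integral>\<^sup>+ r. \<integral>\<^sup>+ s. G' (r, s) \<partial>distr M ?T ?X2 \<partial>distr M ?S ?X1)"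
    by (rule P2.nn_integral_fst[symmetric, OF G'm2])
  also have "\<dots> = (\<integral>\<^sup>+\<omega>. (\<integral>\<^sup>+ s. G' (?X1 \<omega>, s) \<partial>distr M ?T ?X2) \<partial>M)"
    by (rule nn_integral_distr'[OF m1 W])
  also have "\<dots> = (\<integral>\<^sup>+\<omega>. (\<integral>\<^sup>+th. G (?\<Phi> (?X1 \<omega>), th) \<partial>Th) \<partial>M)"
    by (intro nn_integral_cong inner_eq) (metis measurable_space m1)
  also have "\<dots> = (\<integral>\<^sup>+\<omega>. (\<integral>\<^sup>+th. G (Z t \<omega>, th) \<partial>Th) \<partial>M)"
    by (simp add: Z_restrict)
  finally show ?thesis .
qed

end



lemma norm_vec_sq: "(norm (v::real^'i::finite))\<^sup>2 = (\<Sum>i\<in>UNIV. (v$i)\<^sup>2)"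
  by (simp only: power2_norm_eq_inner) (simp add: inner_vec_def power2_eq_square)

lemma per_i:
  fixes l lam hh hs \<upsilon> \<eta> \<delta> :: real
  assumes "0 \<le> lam" "0 \<le> \<eta>" "0 \<le> \<delta>"
  shows "(max 0 ((1 - \<eta>\<^sup>2 * \<delta>) * l + \<eta> * (hh + \<upsilon>)) - lam)\<^sup>2
     + 2 * \<eta> * (lam * (hh + \<upsilon>) - l * (hs + \<upsilon>) - \<delta> * \<eta> / 2 * lam\<^sup>2 + \<delta> * \<eta> / 2 * l\<^sup>2)
     + 2 * \<eta> * (l * (hs - hh))
   \<le> (l - lam)\<^sup>2 + \<eta>\<^sup>2 * (4 * hh\<^sup>2 + 4 * \<upsilon>\<^sup>2 + 2 * \<delta>\<^sup>2 * \<eta>\<^sup>2 * l\<^sup>2)"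
proof -
  define a where "a = (1 - \<eta>\<^sup>2 * \<delta>) * l + \<eta> * (hh + \<upsilon>)"
  define g where "g = hh + \<upsilon> - \<eta> * \<delta> * l"
  have m: "(max 0 a - lam)\<^sup>2 \<le> (a - lam)\<^sup>2"
  proof (cases "a \<le> 0")
    case True
    then have "\<bar>0 - lam\<bar> \<le> \<bar>a - lam\<bar>" using assms(1) by simp
    then have "(0 - lam)\<^sup>2 \<le> (a - lam)\<^sup>2" by (simp add: abs_le_square_iff)
    with True show ?thesis by (simp add: max_def)
  next
    case False then show ?thesis by (simp add: max_def)
  qed
  have id: "(a - lam)\<^sup>2
     + 2 * \<eta> * (lam * (hh + \<upsilon>) - l * (hs + \<upsilon>) - \<delta> * \<eta> / 2 * lam\<^sup>2 + \<delta> * \<eta> / 2 * l\<^sup>2)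
     + 2 * \<eta> * (l * (hs - hh)) = (l - lam)\<^sup>2 + \<eta>\<^sup>2 * g\<^sup>2 - \<eta>\<^sup>2 * \<delta> * (l - lam)\<^sup>2"
    unfolding a_def g_def by (simp add: power2_eq_square algebra_simps)
  have g2: "g\<^sup>2 \<le> 4 * hh\<^sup>2 + 4 * \<upsilon>\<^sup>2 + 2 * \<delta>\<^sup>2 * \<eta>\<^sup>2 * l\<^sup>2"
  proof -
    have "g\<^sup>2 \<le> 2 * (hh + \<upsilon>)\<^sup>2 + 2 * (\<eta> * \<delta> * l)\<^sup>2"
      unfolding g_def using sum_squares_ge_zero[of "hh + \<upsilon> + \<eta> * \<delta> * l" 0]
      by (simp add: power2_eq_square algebra_simps)
    moreover have "(hh + \<upsilon>)\<^sup>2 \<le> 2 * hh\<^sup>2 + 2 * \<upsilon>\<^sup>2"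
      using sum_squares_ge_zero[of "hh - \<upsilon>" 0] by (simp add: power2_eq_square algebra_simps)
    moreover have "(\<eta> * \<delta> * l)\<^sup>2 = \<delta>\<^sup>2 * \<eta>\<^sup>2 * l\<^sup>2" by (simp add: power_mult_distrib)
    ultimately show ?thesis by linarith
  qed
  have "\<eta>\<^sup>2 * g\<^sup>2 \<le> \<eta>\<^sup>2 * (4 * hh\<^sup>2 + 4 * \<upsilon>\<^sup>2 + 2 * \<delta>\<^sup>2 * \<eta>\<^sup>2 * l\<^sup>2)"
    by (rule mult_left_mono[OF g2]) simp
  moreover have "0 \<le> \<eta>\<^sup>2 * \<delta> * (l - lam)\<^sup>2" using assms by simp
  ultimately show ?thesis using m id unfolding a_def by linarith
qed

lemma sq_sum_le: "(norm (a + b :: 'x::real_normed_vector))\<^sup>2 \<le> 2 * (norm a)\<^sup>2 + 2 * (norm b)\<^sup>2"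
proof -
  have "norm (a + b) \<le> norm a + norm b" by (rule norm_triangle_ineq)
  then have "(norm (a + b))\<^sup>2 \<le> (norm a + norm b)\<^sup>2" by (simp add: power_mono)
  also have "\<dots> \<le> 2 * (norm a)\<^sup>2 + 2 * (norm b)\<^sup>2"
    using sum_squares_ge_zero[of "norm a - norm b" 0] by (simp add: power2_eq_square algebra_simps)
  finally show ?thesis .
qed

lemma norm_lin_comb:
  fixes l :: "real^'i::finite" and v :: "'i \<Rightarrow> 'x::real_normed_vector"
  assumes "\<And>i. 0 \<le> l$i"
  shows "(norm (\<Sum>i\<in>UNIV. l$i *\<^sub>R v i))\<^sup>2 \<le> (norm l)\<^sup>2 * (\<Sum>i\<in>UNIV. (norm (v i))\<^sup>2)"
proof -
  define b :: "real^'i" where "b = (\<chi> i. norm (v i))"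
  have "norm (\<Sum>i\<in>UNIV. l$i *\<^sub>R v i) \<le> (\<Sum>i\<in>UNIV. norm (l$i *\<^sub>R v i))" by (rule norm_sum)
  also have "\<dots> = l \<bullet> b" using assms by (simp add: b_def inner_vec_def)
  also have "\<dots> \<le> norm l * norm b" by (rule norm_cauchy_schwarz)
  finally have "(norm (\<Sum>i\<in>UNIV. l$i *\<^sub>R v i))\<^sup>2 \<le> (norm l * norm b)\<^sup>2" by (simp add: power_mono)
  also have "\<dots> = (norm l)\<^sup>2 * (\<Sum>i\<in>UNIV. (norm (v i))\<^sup>2)"
    by (simp add: power_mult_distrib norm_vec_sq b_def)
  finally show ?thesis .
qed

context setting begin

definition V where "V z = (norm (fst z - xstar))\<^sup>2 + (norm (snd z - lam))\<^sup>2"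

definition Lhs where "Lhs x (l::real^'i) th = f x th - f xstar th
   + (\<Sum>i\<in>UNIV. lam$i * (h i x th + \<upsilon>) - l$i * (h i xstar th + \<upsilon>) - \<delta> * \<eta> / 2 * (lam$i)\<^sup>2 + \<delta> * \<eta> / 2 * (l$i)\<^sup>2)"

definition Gb where "Gb x (l::real^'i) th = 2 * (norm (gf x th))\<^sup>2 + 2 * (norm l)\<^sup>2 * (\<Sum>i\<in>UNIV. (norm (gh i x th))\<^sup>2)
   + (\<Sum>i\<in>UNIV. 4 * (h i x th)\<^sup>2 + 4 * \<upsilon>\<^sup>2 + 2 * \<delta>\<^sup>2 * \<eta>\<^sup>2 * (l$i)\<^sup>2)"

lemma delta_nonneg: "0 \<le> \<delta>" by (simp add: \<delta>_def)

lemma pathwise: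
  assumes th: "th \<in> space Th" and x: "x \<in> X" and l: "\<And>i. 0 \<le> l$i"
  shows "V (stp X gf h gh \<eta> \<delta> \<upsilon> (x, l) th) \<le> V (x, l) + \<eta>\<^sup>2 * Gb x l th - 2 * \<eta> * Lhs x l th"
proof -
  define g where "g = gf x th + (\<Sum>i\<in>UNIV. l$i *\<^sub>R gh i x th)"
  define xn where "xn = closest_point X (x - \<eta> *\<^sub>R g)"
  define a where "a i = (1 - \<eta>\<^sup>2 * \<delta>) * l$i + \<eta> * (h i x th + \<upsilon>)" for i
  have stp_eq: "stp X gf h gh \<eta> \<delta> \<upsilon> (x, l) th = (xn, \<chi> i. max 0 (a i))"
    by (simp add: stp_def xn_def g_def a_def)
  have "dist xn (closest_point X xstar) \<le> dist (x - \<eta> *\<^sub>R g) xstar"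
    unfolding xn_def by (rule closest_point_lipschitz[OF X(2) Xclosed X(3)])
  then have "norm (xn - xstar) \<le> norm (x - \<eta> *\<^sub>R g - xstar)"
    by (simp add: closest_point_self[OF xstar(1)] dist_norm)
  then have d1: "(norm (xn - xstar))\<^sup>2 \<le> (norm (x - \<eta> *\<^sub>R g - xstar))\<^sup>2"
    by (simp add: power_mono)
  have d2: "(norm (x - \<eta> *\<^sub>R g - xstar))\<^sup>2 = (norm (x - xstar))\<^sup>2 + 2 * \<eta> * (g \<bullet> (xstar - x)) + \<eta>\<^sup>2 * (norm g)\<^sup>2"
    by (simp only: power2_norm_eq_inner) (simp add: inner_diff_left inner_diff_right inner_commute algebra_simps power2_eq_square)
  have lin: "linear (\<lambda>v. w \<bullet> v)" for w :: 'a by (simp add: bounded_linear.linear bounded_linear_inner_right)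
  have gf1: "f x th + gf x th \<bullet> (xstar - x) \<le> f xstar th"
    by (rule convex_grad_ineq[OF f_conv[OF th] X(2) x xstar(1) f_diff[OF th x] lin])
  have gh1: "h i x th + gh i x th \<bullet> (xstar - x) \<le> h i xstar th" for i
    by (rule convex_grad_ineq[OF h_conv[OF th] X(2) x xstar(1) h_diff[OF th x] lin])
  have "g \<bullet> (xstar - x) = gf x th \<bullet> (xstar - x) + (\<Sum>i\<in>UNIV. l$i * (gh i x th \<bullet> (xstar - x)))"
    by (simp add: g_def inner_add_left inner_sum_left)
  also have "\<dots> \<le> (f xstar th - f x th) + (\<Sum>i\<in>UNIV. l$i * (h i xstar th - h i x th))"
    using gf1 gh1 l by (intro add_mono sum_mono mult_left_mono) (auto simp: algebra_simps)
  finally have d3: "g \<bullet> (xstar - x) \<le> (f xstar th - f x th) + (\<Sum>i\<in>UNIV. l$i * (h i xstar th - h i x th))" .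
  have d4: "(norm g)\<^sup>2 \<le> 2 * (norm (gf x th))\<^sup>2 + 2 * ((norm l)\<^sup>2 * (\<Sum>i\<in>UNIV. (norm (gh i x th))\<^sup>2))"
    using sq_sum_le[of "gf x th" "\<Sum>i\<in>UNIV. l$i *\<^sub>R gh i x th"] norm_lin_comb[OF l, of "\<lambda>i. gh i x th"]
    unfolding g_def by linarith
  have pi: "(max 0 (a i) - lam$i)\<^sup>2
     + 2 * \<eta> * (lam$i * (h i x th + \<upsilon>) - l$i * (h i xstar th + \<upsilon>) - \<delta> * \<eta> / 2 * (lam$i)\<^sup>2 + \<delta> * \<eta> / 2 * (l$i)\<^sup>2)
     + 2 * \<eta> * (l$i * (h i xstar th - h i x th))
   \<le> (l$i - lam$i)\<^sup>2 + \<eta>\<^sup>2 * (4 * (h i x th)\<^sup>2 + 4 * \<upsilon>\<^sup>2 + 2 * \<delta>\<^sup>2 * \<eta>\<^sup>2 * (l$i)\<^sup>2)" for i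
    unfolding a_def by (rule per_i[OF lam]) (use \<eta> delta_nonneg in auto)
  define L1 where "L1 = (\<lambda>i. (max 0 (a i) - lam$i)\<^sup>2)"
  define L2 where "L2 = (\<lambda>i. lam$i * (h i x th + \<upsilon>) - l$i * (h i xstar th + \<upsilon>) - \<delta> * \<eta> / 2 * (lam$i)\<^sup>2 + \<delta> * \<eta> / 2 * (l$i)\<^sup>2)"
  define L3 where "L3 = (\<lambda>i. l$i * (h i xstar th - h i x th))"
  define R1 where "R1 = (\<lambda>i. (l$i - lam$i)\<^sup>2)"
  define R2 where "R2 = (\<lambda>i. 4 * (h i x th)\<^sup>2 + 4 * \<upsilon>\<^sup>2 + 2 * \<delta>\<^sup>2 * \<eta>\<^sup>2 * (l$i)\<^sup>2)"
  have s1: "(\<Sum>i\<in>UNIV. L1 i + 2 * \<eta> * L2 i + 2 * \<eta> * L3 i) \<le> (\<Sum>i\<in>UNIV. R1 i + \<eta>\<^sup>2 * R2 i)"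
    unfolding L1_def L2_def L3_def R1_def R2_def by (intro sum_mono pi)
  have s2: "(\<Sum>i\<in>UNIV. L1 i + 2 * \<eta> * L2 i + 2 * \<eta> * L3 i) = (\<Sum>i\<in>UNIV. L1 i) + 2 * \<eta> * (\<Sum>i\<in>UNIV. L2 i) + 2 * \<eta> * (\<Sum>i\<in>UNIV. L3 i)"
    by (simp only: sum.distrib sum_distrib_left)
  have s3: "(\<Sum>i\<in>UNIV. R1 i + \<eta>\<^sup>2 * R2 i) = (\<Sum>i\<in>UNIV. R1 i) + \<eta>\<^sup>2 * (\<Sum>i\<in>UNIV. R2 i)"
    by (simp only: sum.distrib sum_distrib_left)
  have ps: "(\<Sum>i\<in>UNIV. L1 i) + 2 * \<eta> * (\<Sum>i\<in>UNIV. L2 i) + 2 * \<eta> * (\<Sum>i\<in>UNIV. L3 i)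
     \<le> (\<Sum>i\<in>UNIV. R1 i) + \<eta>\<^sup>2 * (\<Sum>i\<in>UNIV. R2 i)"
    using s1 s2 s3 by linarith
  have n2: "(norm ((\<chi> i. max 0 (a i)) - lam))\<^sup>2 = (\<Sum>i\<in>UNIV. (max 0 (a i) - lam$i)\<^sup>2)"
    by (simp add: norm_vec_sq)
  have n3: "(norm (l - lam))\<^sup>2 = (\<Sum>i\<in>UNIV. (l$i - lam$i)\<^sup>2)"
    by (simp add: norm_vec_sq)
  have e0: "0 \<le> \<eta>" using \<eta> by simp
  have d3': "2 * \<eta> * (g \<bullet> (xstar - x)) \<le> 2 * \<eta> * ((f xstar th - f x th) + (\<Sum>i\<in>UNIV. l$i * (h i xstar th - h i x th)))"
    using d3 e0 by (simp add: mult_left_mono)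
  have d4': "\<eta>\<^sup>2 * (norm g)\<^sup>2 \<le> \<eta>\<^sup>2 * (2 * (norm (gf x th))\<^sup>2 + 2 * ((norm l)\<^sup>2 * (\<Sum>i\<in>UNIV. (norm (gh i x th))\<^sup>2)))"
    using d4 by (simp add: mult_left_mono)
  have e1: "\<eta>\<^sup>2 * Gb x l th = \<eta>\<^sup>2 * (2 * (norm (gf x th))\<^sup>2) + \<eta>\<^sup>2 * (2 * ((norm l)\<^sup>2 * (\<Sum>i\<in>UNIV. (norm (gh i x th))\<^sup>2))) + \<eta>\<^sup>2 * (\<Sum>i\<in>UNIV. R2 i)"
    unfolding Gb_def R2_def by (simp add: algebra_simps)
  have e2: "2 * \<eta> * Lhs x l th = 2 * \<eta> * (f x th - f xstar th) + 2 * \<eta> * (\<Sum>i\<in>UNIV. L2 i)"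
    unfolding Lhs_def L2_def by (simp add: algebra_simps)
  have e3: "2 * \<eta> * ((f xstar th - f x th) + (\<Sum>i\<in>UNIV. L3 i)) = - (2 * \<eta> * (f x th - f xstar th)) + 2 * \<eta> * (\<Sum>i\<in>UNIV. L3 i)"
    by (simp add: algebra_simps)
  have e4: "\<eta>\<^sup>2 * (2 * (norm (gf x th))\<^sup>2 + 2 * ((norm l)\<^sup>2 * (\<Sum>i\<in>UNIV. (norm (gh i x th))\<^sup>2))) = \<eta>\<^sup>2 * (2 * (norm (gf x th))\<^sup>2) + \<eta>\<^sup>2 * (2 * ((norm l)\<^sup>2 * (\<Sum>i\<in>UNIV. (norm (gh i x th))\<^sup>2)))"
    by (simp add: algebra_simps)
  have V1: "V (stp X gf h gh \<eta> \<delta> \<upsilon> (x, l) th) = (norm (xn - xstar))\<^sup>2 + (\<Sum>i\<in>UNIV. L1 i)"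
    unfolding stp_eq V_def fst_conv snd_conv n2 L1_def ..
  have V0: "V (x, l) = (norm (x - xstar))\<^sup>2 + (\<Sum>i\<in>UNIV. R1 i)"
    unfolding V_def fst_conv snd_conv n3 R1_def ..
  have d3'': "2 * \<eta> * (g \<bullet> (xstar - x)) \<le> - (2 * \<eta> * (f x th - f xstar th)) + 2 * \<eta> * (\<Sum>i\<in>UNIV. L3 i)"
    using d3' e3 unfolding L3_def by linarith
  show ?thesis
    unfolding V1 V0 e1 e2 using d1 d2 d3'' d4' e4 ps by linarith
qed

end



lemma sec_meas:
  assumes "(\<lambda>p. G (fst p) (snd p)) \<in> borel_measurable (borel \<Otimes>\<^sub>M N)"
  shows "G x \<in> borel_measurable N"
  using measurable_Pair2[OF assms, of x] by simp

lemma nn_bound_int: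
  fixes u :: "'x \<Rightarrow> real"
  assumes "u \<in> borel_measurable N" "\<And>t. 0 \<le> u t" "(\<integral>\<^sup>+t. ennreal (u t) \<partial>N) \<le> ennreal s" "0 \<le> s"
  shows "integrable N u \<and> integral\<^sup>L N u \<le> s"
proof -
  have lt: "(\<integral>\<^sup>+t. ennreal (u t) \<partial>N) < \<infinity>"
    using assms(3) by (rule order.strict_trans1) simp
  have i: "integrable N u"
    by (rule integrableI_nonneg) (use assms(1,2) lt in auto)
  have "ennreal (integral\<^sup>L N u) \<le> ennreal s"
    using nn_integral_eq_integral[OF i] assms(2,3) by simp
  then show ?thesis using i assms(4) by (simp add: ennreal_le_iff)
qed

context setting begin

definition Q where "Q x = (expfun Th f x - expfun Th f xstar) + (\<Sum>i\<in>UNIV. lam$i * (expfun Th (h i) x + \<upsilon>))"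

lemma B_pos: "0 < B"
proof -
  have "0 \<le> B" using B_def \<sigma>_nonneg by (simp add: le_max_iff_disj)
  moreover have "B \<noteq> 0" using \<eta> by auto
  ultimately show ?thesis by simp
qed

lemma sf_B: "\<sigma>f\<^sup>2 \<le> B\<^sup>2"
  using B_def \<sigma>_nonneg by (simp add: power_mono)

lemma sh_B: "real CARD('i) * \<sigma>h\<^sup>2 \<le> B\<^sup>2"
proof -
  have "\<sigma>h * sqrt (real CARD('i)) \<le> B" using B_def by simp
  then have "(\<sigma>h * sqrt (real CARD('i)))\<^sup>2 \<le> B\<^sup>2" using \<sigma>_nonneg by (intro power_mono) auto
  then show ?thesis by (simp add: power_mult_distrib mult.commute)
qed

lemma de_B: "\<delta>\<^sup>2 * \<eta>\<^sup>2 \<le> B\<^sup>2"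
proof -
  have "4 * B * \<eta> < 1" using \<eta> B_pos by (simp add: field_simps)
  then have "\<delta> * \<eta> \<le> B" using B_pos \<delta>_def
    by (simp add: power2_eq_square)
  moreover have "0 \<le> \<delta> * \<eta>" using \<eta> delta_nonneg by simp
  ultimately have "(\<delta> * \<eta>)\<^sup>2 \<le> B\<^sup>2" by (intro power_mono)
  then show ?thesis by (simp add: power_mult_distrib)
qed

lemma ups_sl: "\<upsilon>\<^sup>2 \<le> \<sigma>l\<^sup>2"
  using \<upsilon> by (intro power_mono) auto

lemma int_ngf: "x \<in> X \<Longrightarrow> integrable Th (\<lambda>th. (norm (gf x th))\<^sup>2) \<and> (\<integral>th. (norm (gf x th))\<^sup>2 \<partial>Th) \<le> \<sigma>f\<^sup>2"
  by (rule nn_bound_int) (use sec_meas[OF gf_meas, of x] A1f in auto)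

lemma int_ngh: "x \<in> X \<Longrightarrow> integrable Th (\<lambda>th. (norm (gh i x th))\<^sup>2) \<and> (\<integral>th. (norm (gh i x th))\<^sup>2 \<partial>Th) \<le> \<sigma>h\<^sup>2"
  by (rule nn_bound_int) (use sec_meas[OF gh_meas, of i x] A1h in auto)

lemma int_h2: "x \<in> X \<Longrightarrow> integrable Th (\<lambda>th. (h i x th)\<^sup>2) \<and> (\<integral>th. (h i x th)\<^sup>2 \<partial>Th) \<le> \<sigma>l\<^sup>2"
  by (rule nn_bound_int) (use sec_meas[OF h_meas, of i x] A2 in auto)

lemma int_h: "x \<in> X \<Longrightarrow> integrable Th (h i x)"
proof -
  interpret PT: prob_space Th by (rule Th_prob)
  assume x: "x \<in> X"
  show ?thesis
    by (rule PT.square_integrable_imp_integrable[OF sec_meas[OF h_meas]]) (use int_h2[OF x] in auto)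
qed

lemma step_integral:
  assumes x: "x \<in> X" and l: "\<And>i. 0 \<le> l$i"
  shows "(\<integral>\<^sup>+th. ennreal (V (stp X gf h gh \<eta> \<delta> \<upsilon> (x, l) th)) \<partial>Th)
           \<le> ennreal (V (x, l) + 2 * \<eta> * (P * \<eta> + \<delta> * \<eta> / 2 * (norm lam)\<^sup>2 - Q x))"
    "0 \<le> V (x, l) + 2 * \<eta> * (P * \<eta> + \<delta> * \<eta> / 2 * (norm lam)\<^sup>2 - Q x)"
proof -
  interpret PT: prob_space Th by (rule Th_prob)
  note ix[simp] = f_int[OF x] f_int[OF xstar(1)] int_h[OF x] int_h[OF xstar(1)]
     int_ngf[OF x, THEN conjunct1] int_ngh[OF x, THEN conjunct1] int_h2[OF x, THEN conjunct1] PT.prob_space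
  define c where "c = \<delta> * \<eta> / 2"
  define A where "A th = V (x, l) + \<eta>\<^sup>2 * Gb x l th - 2 * \<eta> * Lhs x l th" for th
  have iLhs: "integrable Th (Lhs x l)" unfolding Lhs_def by simp
  have Lhs_eq: "integral\<^sup>L Th (Lhs x l) = (expfun Th f x - expfun Th f xstar) +
      (\<Sum>i\<in>UNIV. lam$i * (expfun Th (h i) x + \<upsilon>) - l$i * (expfun Th (h i) xstar + \<upsilon>) - \<delta> * \<eta> / 2 * (lam$i)\<^sup>2 + \<delta> * \<eta> / 2 * (l$i)\<^sup>2)"
    unfolding Lhs_def expfun_def by simp
  have iGb: "integrable Th (Gb x l)" unfolding Gb_def by simp
  have Gb_eq: "integral\<^sup>L Th (Gb x l) = 2 * (\<integral>th. (norm (gf x th))\<^sup>2 \<partial>Th) + 2 * (norm l)\<^sup>2 * (\<Sum>i\<in>UNIV. (\<integral>th. (norm (gh i x th))\<^sup>2 \<partial>Th))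
      + (\<Sum>i\<in>UNIV. 4 * (\<integral>th. (h i x th)\<^sup>2 \<partial>Th) + 4 * \<upsilon>\<^sup>2 + 2 * \<delta>\<^sup>2 * \<eta>\<^sup>2 * (l$i)\<^sup>2)"
    unfolding Gb_def by simp
  have "(\<Sum>i\<in>UNIV. (\<integral>th. (norm (gh i x th))\<^sup>2 \<partial>Th)) \<le> (\<Sum>i\<in>(UNIV::'i set). \<sigma>h\<^sup>2)"
    by (intro sum_mono) (use int_ngh[OF x] in auto)
  then have g1: "(\<Sum>i\<in>UNIV. (\<integral>th. (norm (gh i x th))\<^sup>2 \<partial>Th)) \<le> real CARD('i) * \<sigma>h\<^sup>2" by simp
  have "(\<Sum>i\<in>UNIV. 4 * (\<integral>th. (h i x th)\<^sup>2 \<partial>Th) + 4 * \<upsilon>\<^sup>2 + 2 * \<delta>\<^sup>2 * \<eta>\<^sup>2 * (l$i)\<^sup>2)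
      \<le> (\<Sum>i\<in>UNIV. 4 * \<sigma>l\<^sup>2 + 4 * \<upsilon>\<^sup>2 + 2 * \<delta>\<^sup>2 * \<eta>\<^sup>2 * (l$i)\<^sup>2)"
    by (intro sum_mono) (use int_h2[OF x] in auto)
  also have "\<dots> = real CARD('i) * (4 * \<sigma>l\<^sup>2 + 4 * \<upsilon>\<^sup>2) + 2 * \<delta>\<^sup>2 * \<eta>\<^sup>2 * (norm l)\<^sup>2"
    by (simp add: sum.distrib norm_vec_sq sum_distrib_left algebra_simps)
  finally have g2: "(\<Sum>i\<in>UNIV. 4 * (\<integral>th. (h i x th)\<^sup>2 \<partial>Th) + 4 * \<upsilon>\<^sup>2 + 2 * \<delta>\<^sup>2 * \<eta>\<^sup>2 * (l$i)\<^sup>2)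
      \<le> real CARD('i) * (4 * \<sigma>l\<^sup>2 + 4 * \<upsilon>\<^sup>2) + 2 * \<delta>\<^sup>2 * \<eta>\<^sup>2 * (norm l)\<^sup>2" .
  have nl: "0 \<le> (norm l)\<^sup>2" by simp
  have "2 * (norm l)\<^sup>2 * (\<Sum>i\<in>UNIV. (\<integral>th. (norm (gh i x th))\<^sup>2 \<partial>Th)) \<le> 2 * (norm l)\<^sup>2 * (real CARD('i) * \<sigma>h\<^sup>2)"
    using g1 nl by (intro mult_left_mono) auto
  then have GbB: "integral\<^sup>L Th (Gb x l) \<le> 2 * \<sigma>f\<^sup>2 + 2 * (norm l)\<^sup>2 * (real CARD('i) * \<sigma>h\<^sup>2)
      + real CARD('i) * (4 * \<sigma>l\<^sup>2 + 4 * \<upsilon>\<^sup>2) + 2 * \<delta>\<^sup>2 * \<eta>\<^sup>2 * (norm l)\<^sup>2"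
    unfolding Gb_eq using int_ngf[OF x] g2 by linarith
  have k1: "2 * \<sigma>f\<^sup>2 + real CARD('i) * (4 * \<sigma>l\<^sup>2 + 4 * \<upsilon>\<^sup>2) \<le> 2 * P"
  proof -
    have "real CARD('i) * (4 * \<upsilon>\<^sup>2) \<le> real CARD('i) * (4 * \<sigma>l\<^sup>2)"
      using ups_sl by (intro mult_left_mono) auto
    moreover have "real CARD('i) * (4 * \<sigma>l\<^sup>2 + 4 * \<upsilon>\<^sup>2) = real CARD('i) * (4 * \<sigma>l\<^sup>2) + real CARD('i) * (4 * \<upsilon>\<^sup>2)"
      by (simp add: algebra_simps)
    moreover have "2 * P = 2 * B\<^sup>2 + 2 * (real CARD('i) * (4 * \<sigma>l\<^sup>2))" by (simp add: P_def algebra_simps)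
    ultimately show ?thesis using sf_B by linarith
  qed
  have k2: "2 * (norm l)\<^sup>2 * (real CARD('i) * \<sigma>h\<^sup>2) + 2 * \<delta>\<^sup>2 * \<eta>\<^sup>2 * (norm l)\<^sup>2 \<le> 4 * B\<^sup>2 * (norm l)\<^sup>2"
  proof -
    have "(norm l)\<^sup>2 * (real CARD('i) * \<sigma>h\<^sup>2) \<le> (norm l)\<^sup>2 * B\<^sup>2" using sh_B nl by (rule mult_left_mono)
    moreover have "(norm l)\<^sup>2 * (\<delta>\<^sup>2 * \<eta>\<^sup>2) \<le> (norm l)\<^sup>2 * B\<^sup>2" using de_B nl by (rule mult_left_mono)
    ultimately show ?thesis by (simp add: algebra_simps)
  qed
  have GbB2: "\<eta>\<^sup>2 * integral\<^sup>L Th (Gb x l) \<le> \<eta>\<^sup>2 * (2 * P + 4 * B\<^sup>2 * (norm l)\<^sup>2)"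
    using GbB k1 k2 by (intro mult_left_mono) auto
  have sl: "(\<Sum>i\<in>UNIV. lam$i * (expfun Th (h i) x + \<upsilon>) - l$i * (expfun Th (h i) xstar + \<upsilon>) - \<delta> * \<eta> / 2 * (lam$i)\<^sup>2 + \<delta> * \<eta> / 2 * (l$i)\<^sup>2)
     \<ge> (\<Sum>i\<in>UNIV. lam$i * (expfun Th (h i) x + \<upsilon>) - \<delta> * \<eta> / 2 * (lam$i)\<^sup>2 + \<delta> * \<eta> / 2 * (l$i)\<^sup>2)"
  proof (intro sum_mono)
    fix i
    have "0 \<le> l$i * (- (expfun Th (h i) xstar + \<upsilon>))" using l xstar(2)[of i] by simp
    then show "lam$i * (expfun Th (h i) x + \<upsilon>) - \<delta> * \<eta> / 2 * (lam$i)\<^sup>2 + \<delta> * \<eta> / 2 * (l$i)\<^sup>2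
      \<le> lam$i * (expfun Th (h i) x + \<upsilon>) - l$i * (expfun Th (h i) xstar + \<upsilon>) - \<delta> * \<eta> / 2 * (lam$i)\<^sup>2 + \<delta> * \<eta> / 2 * (l$i)\<^sup>2"
      by (simp add: algebra_simps)
  qed
  have sl2: "(\<Sum>i\<in>UNIV. lam$i * (expfun Th (h i) x + \<upsilon>) - \<delta> * \<eta> / 2 * (lam$i)\<^sup>2 + \<delta> * \<eta> / 2 * (l$i)\<^sup>2)
     = (\<Sum>i\<in>UNIV. lam$i * (expfun Th (h i) x + \<upsilon>)) - \<delta> * \<eta> / 2 * (norm lam)\<^sup>2 + \<delta> * \<eta> / 2 * (norm l)\<^sup>2"
    by (simp add: sum.distrib sum_subtractf norm_vec_sq sum_distrib_left)
  have LhsB: "integral\<^sup>L Th (Lhs x l) \<ge> Q x - \<delta> * \<eta> / 2 * (norm lam)\<^sup>2 + \<delta> * \<eta> / 2 * (norm l)\<^sup>2"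
    unfolding Lhs_eq Q_def using sl sl2 by linarith
  have iA: "integrable Th A" unfolding A_def using iLhs iGb by simp
  have A_eq: "integral\<^sup>L Th A = V (x, l) + \<eta>\<^sup>2 * integral\<^sup>L Th (Gb x l) - 2 * \<eta> * integral\<^sup>L Th (Lhs x l)"
    unfolding A_def using iLhs iGb by simp
  have AB: "integral\<^sup>L Th A \<le> V (x, l) + 2 * \<eta> * (P * \<eta> + \<delta> * \<eta> / 2 * (norm lam)\<^sup>2 - Q x)"
  proof -
    have "2 * \<eta> * (Q x - \<delta> * \<eta> / 2 * (norm lam)\<^sup>2 + \<delta> * \<eta> / 2 * (norm l)\<^sup>2) \<le> 2 * \<eta> * integral\<^sup>L Th (Lhs x l)"
      using LhsB \<eta> by (intro mult_left_mono) auto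
    then show ?thesis unfolding A_eq using GbB2 \<delta>_def by (simp add: algebra_simps power2_eq_square)
  qed
  have pw: "V (stp X gf h gh \<eta> \<delta> \<upsilon> (x, l) th) \<le> A th" if "th \<in> space Th" for th
    unfolding A_def by (rule pathwise[OF that x l])
  have V0: "0 \<le> V z" for z by (simp add: V_def)
  have "(\<integral>\<^sup>+th. ennreal (V (stp X gf h gh \<eta> \<delta> \<upsilon> (x, l) th)) \<partial>Th) \<le> (\<integral>\<^sup>+th. ennreal (A th) \<partial>Th)"
    by (intro nn_integral_mono ennreal_leI pw)
  also have "\<dots> = ennreal (integral\<^sup>L Th A)"
    by (rule nn_integral_eq_integral[OF iA], rule AE_I2) (meson V0 pw order_trans)
  also have "\<dots> \<le> ennreal (V (x, l) + 2 * \<eta> * (P * \<eta> + \<delta> * \<eta> / 2 * (norm lam)\<^sup>2 - Q x))"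
    using AB by (rule ennreal_leI)
  finally show "(\<integral>\<^sup>+th. ennreal (V (stp X gf h gh \<eta> \<delta> \<upsilon> (x, l) th)) \<partial>Th)
           \<le> ennreal (V (x, l) + 2 * \<eta> * (P * \<eta> + \<delta> * \<eta> / 2 * (norm lam)\<^sup>2 - Q x))" .
  have "0 \<le> integral\<^sup>L Th A"
    by (rule integral_nonneg_AE, rule AE_I2) (meson V0 pw order_trans)
  then show "0 \<le> V (x, l) + 2 * \<eta> * (P * \<eta> + \<delta> * \<eta> / 2 * (norm lam)\<^sup>2 - Q x)" using AB by linarith
qed

end



lemma bounded_expfun:
  fixes g :: "'a::euclidean_space \<Rightarrow> 'b \<Rightarrow> real" and gg :: "'a \<Rightarrow> 'b \<Rightarrow> 'a"
  assumes PT: "prob_space Th" and X: "convex X" and x1: "x1 \<in> X"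
   and D: "\<And>x y. x\<in>X \<Longrightarrow> y\<in>X \<Longrightarrow> dist x y \<le> D"
   and cv: "\<And>th. th \<in> space Th \<Longrightarrow> convex_on X (\<lambda>x. g x th)"
   and df: "\<And>th x. th \<in> space Th \<Longrightarrow> x \<in> X \<Longrightarrow> ((\<lambda>y. g y th) has_derivative (\<lambda>v. gg x th \<bullet> v)) (at x)"
   and ig: "\<And>x. x \<in> X \<Longrightarrow> integrable Th (g x)"
   and igg: "\<And>x. x \<in> X \<Longrightarrow> integrable Th (\<lambda>th. (norm (gg x th))\<^sup>2) \<and> (\<integral>th. (norm (gg x th))\<^sup>2 \<partial>Th) \<le> S"
  shows "\<exists>K. \<forall>x\<in>X. \<bar>expfun Th g x\<bar> \<le> K"
proof -
  interpret PT: prob_space Th by (rule PT)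
  have D0: "0 \<le> D" using D[OF x1 x1] by simp
  have lin: "linear (\<lambda>v. w \<bullet> v)" for w :: 'a by (simp add: bounded_linear.linear bounded_linear_inner_right)
  have "\<bar>expfun Th g x\<bar> \<le> \<bar>expfun Th g x1\<bar> + D * (1 + 2 * S)" if x: "x \<in> X" for x
  proof -
    define n1 where "n1 th = (norm (gg x1 th))\<^sup>2" for th
    define n where "n th = (norm (gg x th))\<^sup>2" for th
    have pt: "\<bar>g x th - g x1 th\<bar> \<le> D * (1 + n1 th + n th)" if th: "th \<in> space Th" for th
    proof -
      have a1: "g x1 th + gg x1 th \<bullet> (x - x1) \<le> g x th"
        by (rule convex_grad_ineq[OF cv[OF th] X x1 x df[OF th x1] lin])
      have a2: "g x th + gg x th \<bullet> (x1 - x) \<le> g x1 th"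
        by (rule convex_grad_ineq[OF cv[OF th] X x x1 df[OF th x] lin])
      have cs: "\<bar>gg z th \<bullet> v\<bar> \<le> D * (1 + (norm (gg z th))\<^sup>2)" if "norm v \<le> D" for z v
      proof -
        have "\<bar>gg z th \<bullet> v\<bar> \<le> norm (gg z th) * norm v" by (rule Cauchy_Schwarz_ineq2)
        also have "\<dots> \<le> norm (gg z th) * D" using that by (intro mult_left_mono) auto
        also have "\<dots> \<le> (1 + (norm (gg z th))\<^sup>2) * D"
        proof (intro mult_right_mono D0)
          have "2 * norm (gg z th) \<le> 1 + (norm (gg z th))\<^sup>2"
            using sum_squares_ge_zero[of "norm (gg z th) - 1" 0] by (simp add: power2_eq_square algebra_simps)
          then show "norm (gg z th) \<le> 1 + (norm (gg z th))\<^sup>2"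
            using norm_ge_zero[of "gg z th"] by linarith
        qed
        finally show ?thesis by (simp add: mult.commute)
      qed
      have "norm (x - x1) \<le> D" "norm (x1 - x) \<le> D" using D[OF x x1] D[OF x1 x] by (simp_all add: dist_norm)
      then have "\<bar>gg x1 th \<bullet> (x - x1)\<bar> \<le> D * (1 + n1 th)" "\<bar>gg x th \<bullet> (x1 - x)\<bar> \<le> D * (1 + n th)"
        using cs unfolding n1_def n_def by auto
      moreover have "D * (1 + n1 th) \<le> D * (1 + n1 th + n th)" "D * (1 + n th) \<le> D * (1 + n1 th + n th)"
        using D0 by (intro mult_left_mono, simp add: n1_def n_def, simp)+
      ultimately show ?thesis using a1 a2 by linarith
    qed
    have i1: "integrable Th n1" "integrable Th n" using igg[OF x1] igg[OF x] unfolding n1_def n_def by auto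
    have "expfun Th g x = expfun Th g x1 + (\<integral>th. g x th - g x1 th \<partial>Th)"
      unfolding expfun_def using ig[OF x] ig[OF x1] by simp
    moreover have "\<bar>\<integral>th. g x th - g x1 th \<partial>Th\<bar> \<le> (\<integral>th. \<bar>g x th - g x1 th\<bar> \<partial>Th)"
      by (rule integral_abs_bound)
    moreover have "(\<integral>th. \<bar>g x th - g x1 th\<bar> \<partial>Th) \<le> (\<integral>th. D * (1 + n1 th + n th) \<partial>Th)"
      by (rule integral_mono) (use ig[OF x] ig[OF x1] i1 pt in auto)
    moreover have "(\<integral>th. D * (1 + n1 th + n th) \<partial>Th) = D * (1 + integral\<^sup>L Th n1 + integral\<^sup>L Th n)"
      using i1 by (simp add: PT.prob_space)
    moreover have "D * (1 + integral\<^sup>L Th n1 + integral\<^sup>L Th n) \<le> D * (1 + 2 * S)"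
      using igg[OF x1] igg[OF x] D0 unfolding n1_def n_def by (intro mult_left_mono) auto
    ultimately show ?thesis by linarith
  qed
  then show ?thesis by blast
qed

context setting begin

lemma expfun_meas:
  assumes "(\<lambda>p. g (fst p) (snd p)) \<in> borel_measurable (borel \<Otimes>\<^sub>M Th)"
  shows "expfun Th g \<in> borel_measurable borel"
proof -
  interpret PT: sigma_finite_measure Th by (rule Th_sf)
  have "case_prod g = (\<lambda>p. g (fst p) (snd p))" by (rule ext) auto
  then have "(\<lambda>x. \<integral>th. g x th \<partial>Th) \<in> borel_measurable borel"
    using PT.borel_measurable_lebesgue_integral[of g borel] assms by simp
  moreover have "expfun Th g = (\<lambda>x. \<integral>th. g x th \<partial>Th)" by (rule ext) (simp add: expfun_def)
  ultimately show ?thesis by simp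
qed

lemma F_bdd: "\<exists>K. \<forall>x\<in>X. \<bar>expfun Th f x\<bar> \<le> K"
  by (rule bounded_expfun[OF Th_prob X(2) x1 A3 f_conv f_diff f_int int_ngf])

lemma H_bdd: "\<exists>K. \<forall>x\<in>X. \<bar>expfun Th (h i) x\<bar> \<le> K"
  by (rule bounded_expfun[OF Th_prob X(2) x1 A3 h_conv h_diff int_h int_ngh])

lemma V_meas: "V \<in> borel_measurable borel"
  unfolding V_def[abs_def] by (intro borel_measurable_continuous_onI continuous_intros)

lemma Z_Suc: "Z (Suc t) \<omega> = stp X gf h gh \<eta> \<delta> \<upsilon> (Z t \<omega>) (\<theta> t \<omega>)"
  unfolding Z_def by (simp only: csoa_Suc')

lemma main:
  shows "(\<Sum>t<T. \<integral>\<omega>. expfun Th f (fst (csoa X gf h gh \<eta> \<delta> \<upsilon> x1 (\<lambda>k. \<theta> k \<omega>) t))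
                          - expfun Th f xstar \<partial>M)
         - (2 * B\<^sup>2 * \<eta> * real T + 1 / (2 * \<eta>)) * (norm lam)\<^sup>2
         + (\<Sum>t<T. \<integral>\<omega>. (\<Sum>i\<in>UNIV. lam $ i *
               (expfun Th (h i) (fst (csoa X gf h gh \<eta> \<delta> \<upsilon> x1 (\<lambda>k. \<theta> k \<omega>) t)) + \<upsilon>)) \<partial>M)
         \<le> D\<^sup>2 / (2 * \<eta>) + P * \<eta> * real T"
proof -
  interpret PM: prob_space M by (rule M)
  obtain KF where KF: "\<And>x. x \<in> X \<Longrightarrow> \<bar>expfun Th f x\<bar> \<le> KF" using F_bdd by blast
  obtain Kh where Kh: "\<And>i x. x \<in> X \<Longrightarrow> \<bar>expfun Th (h i) x\<bar> \<le> Kh i"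
    using H_bdd by metis
  define F1 where "F1 x = expfun Th f x - expfun Th f xstar" for x
  define H1 where "H1 x = (\<Sum>i\<in>UNIV. lam $ i * (expfun Th (h i) x + \<upsilon>))" for x
  define K1 where "K1 = KF + \<bar>expfun Th f xstar\<bar>"
  define K2 where "K2 = (\<Sum>i\<in>UNIV. lam $ i * (Kh i + \<upsilon>))"
  define K where "K = K1 + K2"
  have QF: "Q x = F1 x + H1 x" for x unfolding Q_def F1_def H1_def ..
  have F1b: "\<bar>F1 x\<bar> \<le> K1" if "x \<in> X" for x
    using KF[OF that] unfolding F1_def K1_def by linarith
  have H1b: "\<bar>H1 x\<bar> \<le> K2" if "x \<in> X" for x
  proof -
    have "\<bar>H1 x\<bar> \<le> (\<Sum>i\<in>UNIV. \<bar>lam $ i * (expfun Th (h i) x + \<upsilon>)\<bar>)"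
      unfolding H1_def by (rule sum_abs)
    also have "\<dots> \<le> K2" unfolding K2_def
    proof (intro sum_mono)
      fix i
      have "\<bar>expfun Th (h i) x + \<upsilon>\<bar> \<le> Kh i + \<upsilon>" using Kh[OF that, of i] \<upsilon> by linarith
      then show "\<bar>lam $ i * (expfun Th (h i) x + \<upsilon>)\<bar> \<le> lam $ i * (Kh i + \<upsilon>)"
        using lam[of i] by (simp add: abs_mult mult_left_mono)
    qed
    finally show ?thesis .
  qed
  have Qb: "\<bar>Q x\<bar> \<le> K" if "x \<in> X" for x
    using F1b[OF that] H1b[OF that] QF[of x] unfolding K_def by linarith
  have K0: "0 \<le> K" using Qb[OF x1] by linarith
  have QK: "0 \<le> 2 * \<eta> * (Q (fst (Z t \<omega>)) + K)" for t \<omega>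
    using Qb[OF Z_in(1)[of t \<omega>]] \<eta> by (intro mult_nonneg_nonneg) auto
  have F1m: "F1 \<in> borel_measurable borel" unfolding F1_def[abs_def] using expfun_meas[OF f_meas] by measurable
  have H1m: "H1 \<in> borel_measurable borel" unfolding H1_def[abs_def] using expfun_meas[OF h_meas] by measurable
  have Qm: "Q \<in> borel_measurable borel" unfolding QF[abs_def] using F1m H1m by measurable
  have xm: "(\<lambda>\<omega>. fst (Z t \<omega>)) \<in> borel_measurable M" for t
    using measurable_compose[OF Z_meas meas_fst_borel] by simp
  have iF1: "integrable M (\<lambda>\<omega>. F1 (fst (Z t \<omega>)))" for t
    by (rule PM.integrable_const_bound[where B=K1]) (use F1b Z_in measurable_compose[OF xm F1m] in auto)
  have iH1: "integrable M (\<lambda>\<omega>. H1 (fst (Z t \<omega>)))" for t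
    by (rule PM.integrable_const_bound[where B=K2]) (use H1b Z_in measurable_compose[OF xm H1m] in auto)
  define C0 where "C0 = P * \<eta> + \<delta> * \<eta> / 2 * (norm lam)\<^sup>2"
  define cst where "cst = 2 * \<eta> * (C0 + K)"
  define e where "e t = (\<integral>\<^sup>+\<omega>. ennreal (V (Z t \<omega>)) \<partial>M)" for t
  define qq where "qq t = (\<integral>\<^sup>+\<omega>. ennreal (2 * \<eta> * (Q (fst (Z t \<omega>)) + K)) \<partial>M)" for t
  have P0: "0 \<le> P" unfolding P_def by simp
  have C00: "0 \<le> C0" unfolding C0_def using P0 \<eta> delta_nonneg by simp
  have cst0: "0 \<le> cst" unfolding cst_def using C00 K0 \<eta> by simp
  have Vm: "(\<lambda>\<omega>. V (Z t \<omega>)) \<in> borel_measurable M" for t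
    using measurable_compose[OF Z_meas V_meas] by simp
  have Qxm: "(\<lambda>\<omega>. Q (fst (Z t \<omega>))) \<in> borel_measurable M" for t
    using measurable_compose[OF xm Qm] by simp
  have step: "e (Suc t) + qq t \<le> e t + ennreal cst" for t
  proof -
    define \<rho> where "\<rho> \<omega> = V (Z t \<omega>) + 2 * \<eta> * (C0 - Q (fst (Z t \<omega>)))" for \<omega>
    have Zp: "Z t \<omega> = (fst (Z t \<omega>), snd (Z t \<omega>))" for \<omega> by simp
    have si: "(\<integral>\<^sup>+th. ennreal (V (stp X gf h gh \<eta> \<delta> \<upsilon> (Z t \<omega>) th)) \<partial>Th) \<le> ennreal (\<rho> \<omega>)"
         "0 \<le> \<rho> \<omega>" for \<omega>
      using step_integral[OF Z_in(1)[of t \<omega>] Z_in(2)[of t \<omega>]] unfolding \<rho>_def C0_def by (simp_all add: Zp[symmetric])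
    have Gm: "(\<lambda>p. ennreal (V (stp X gf h gh \<eta> \<delta> \<upsilon> (fst p) (snd p)))) \<in> borel_measurable ((borel :: ('a \<times> (real^'i)) measure) \<Otimes>\<^sub>M Th)"
      using measurable_compose[OF stp_meas[OF X(2) Xclosed X(3) gf_meas h_meas gh_meas] V_meas] by measurable
    have "e (Suc t) = (\<integral>\<^sup>+\<omega>. ennreal (V (stp X gf h gh \<eta> \<delta> \<upsilon> (Z t \<omega>) (\<theta> t \<omega>))) \<partial>M)"
      unfolding e_def Z_Suc ..
    also have "\<dots> = (\<integral>\<^sup>+\<omega>. (\<integral>\<^sup>+th. ennreal (V (stp X gf h gh \<eta> \<delta> \<upsilon> (Z t \<omega>) th)) \<partial>Th) \<partial>M)"
      using E_indep[OF Gm, of t] by simp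
    also have "\<dots> \<le> (\<integral>\<^sup>+\<omega>. ennreal (\<rho> \<omega>) \<partial>M)"
      by (intro nn_integral_mono si)
    finally have e1: "e (Suc t) \<le> (\<integral>\<^sup>+\<omega>. ennreal (\<rho> \<omega>) \<partial>M)" .
    have \<rho>m: "\<rho> \<in> borel_measurable M" unfolding \<rho>_def[abs_def] using Vm Qxm by measurable
    have qnn: "0 \<le> 2 * \<eta> * (Q (fst (Z t \<omega>)) + K)" for \<omega>
      using Qb[OF Z_in(1)[of t \<omega>]] \<eta> by simp
    have "e (Suc t) + qq t \<le> (\<integral>\<^sup>+\<omega>. ennreal (\<rho> \<omega>) \<partial>M) + qq t"
      using e1 by (rule add_right_mono)
    also have "\<dots> = (\<integral>\<^sup>+\<omega>. ennreal (\<rho> \<omega>) + ennreal (2 * \<eta> * (Q (fst (Z t \<omega>)) + K)) \<partial>M)"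
      unfolding qq_def by (rule nn_integral_add[symmetric]) (use \<rho>m Qxm in measurable)
    also have "\<dots> = (\<integral>\<^sup>+\<omega>. ennreal (V (Z t \<omega>)) + ennreal cst \<partial>M)"
    proof (intro nn_integral_cong)
      fix \<omega>
      have "ennreal (\<rho> \<omega>) + ennreal (2 * \<eta> * (Q (fst (Z t \<omega>)) + K)) = ennreal (\<rho> \<omega> + 2 * \<eta> * (Q (fst (Z t \<omega>)) + K))"
        using si(2) qnn by (simp add: ennreal_plus)
      also have "\<rho> \<omega> + 2 * \<eta> * (Q (fst (Z t \<omega>)) + K) = V (Z t \<omega>) + cst"
        unfolding \<rho>_def cst_def by (simp add: algebra_simps)
      also have "ennreal (V (Z t \<omega>) + cst) = ennreal (V (Z t \<omega>)) + ennreal cst"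
        using cst0 by (simp add: ennreal_plus V_def)
      finally show "ennreal (\<rho> \<omega>) + ennreal (2 * \<eta> * (Q (fst (Z t \<omega>)) + K)) = ennreal (V (Z t \<omega>)) + ennreal cst" .
    qed
    also have "\<dots> = e t + ennreal cst"
      unfolding e_def by (subst nn_integral_add) (use Vm in \<open>auto simp: PM.emeasure_space_1\<close>)
    finally show ?thesis .
  qed
  have ind: "e n + (\<Sum>t<n. qq t) \<le> e 0 + of_nat n * ennreal cst" for n
  proof (induction n)
    case 0 then show ?case by simp
  next
    case (Suc n)
    have "e (Suc n) + (\<Sum>t<Suc n. qq t) = (e (Suc n) + qq n) + (\<Sum>t<n. qq t)" by (simp add: add_ac)
    also have "\<dots> \<le> (e n + ennreal cst) + (\<Sum>t<n. qq t)" by (rule add_right_mono[OF step])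
    also have "\<dots> = (e n + (\<Sum>t<n. qq t)) + ennreal cst" by (simp add: add_ac)
    also have "\<dots> \<le> (e 0 + of_nat n * ennreal cst) + ennreal cst" by (rule add_right_mono[OF Suc])
    also have "\<dots> = e 0 + of_nat (Suc n) * ennreal cst" by (simp add: algebra_simps)
    finally show ?case .
  qed
  define V0 where "V0 = V (x1, 0)"
  have e0: "e 0 = ennreal V0" unfolding e_def V0_def Z_def by (simp add: PM.emeasure_space_1)
  have iQ: "integrable M (\<lambda>\<omega>. 2 * \<eta> * (Q (fst (Z t \<omega>)) + K))" for t
    using iF1[of t] iH1[of t] unfolding QF by simp
  have qq_eq: "qq t = ennreal (\<integral>\<omega>. 2 * \<eta> * (Q (fst (Z t \<omega>)) + K) \<partial>M)" for t
    unfolding qq_def by (rule nn_integral_eq_integral[OF iQ], rule AE_I2) (rule QK)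
  have qn: "0 \<le> (\<integral>\<omega>. 2 * \<eta> * (Q (fst (Z t \<omega>)) + K) \<partial>M)" for t
    by (rule integral_nonneg_AE, rule AE_I2) (rule QK)
  have V00: "0 \<le> V0" unfolding V0_def V_def by simp
  have "ennreal (\<Sum>t<T. (\<integral>\<omega>. 2 * \<eta> * (Q (fst (Z t \<omega>)) + K) \<partial>M)) = (\<Sum>t<T. qq t)"
    unfolding qq_eq using qn by (simp add: sum_ennreal)
  also have "\<dots> \<le> e T + (\<Sum>t<T. qq t)" by simp
  also have "\<dots> \<le> e 0 + of_nat T * ennreal cst" by (rule ind)
  also have "\<dots> = ennreal (V0 + real T * cst)"
    unfolding e0 using V00 cst0 by (simp add: ennreal_plus ennreal_mult' ennreal_of_nat_eq_real_of_nat)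
  finally have main1: "(\<Sum>t<T. (\<integral>\<omega>. 2 * \<eta> * (Q (fst (Z t \<omega>)) + K) \<partial>M)) \<le> V0 + real T * cst"
    using V00 cst0 by (subst (asm) ennreal_le_iff) auto
  have int_eq: "(\<integral>\<omega>. 2 * \<eta> * (Q (fst (Z t \<omega>)) + K) \<partial>M) = 2 * \<eta> * ((\<integral>\<omega>. F1 (fst (Z t \<omega>)) \<partial>M) + (\<integral>\<omega>. H1 (fst (Z t \<omega>)) \<partial>M) + K)" for t
    using iF1[of t] iH1[of t] unfolding QF by (simp add: PM.prob_space)
  define SF where "SF = (\<Sum>t<T. \<integral>\<omega>. F1 (fst (Z t \<omega>)) \<partial>M)"
  define SH where "SH = (\<Sum>t<T. \<integral>\<omega>. H1 (fst (Z t \<omega>)) \<partial>M)"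
  have "(\<Sum>t<T. (\<integral>\<omega>. 2 * \<eta> * (Q (fst (Z t \<omega>)) + K) \<partial>M)) = 2 * \<eta> * (SF + SH + real T * K)"
    unfolding int_eq SF_def SH_def by (simp add: sum_distrib_left sum.distrib algebra_simps)
  with main1 have m2: "2 * \<eta> * (SF + SH + real T * K) \<le> V0 + real T * cst" by simp
  have "2 * \<eta> * (SF + SH) \<le> V0 + real T * (2 * \<eta> * C0)"
    using m2 unfolding cst_def by (simp add: algebra_simps)
  moreover have "V0 \<le> D\<^sup>2 + (norm lam)\<^sup>2"
  proof -
    have d: "norm (x1 - xstar) \<le> D" using A3[OF x1 xstar(1)] by (simp add: dist_norm)
    have "(norm (x1 - xstar))\<^sup>2 \<le> D\<^sup>2" using d by (intro power_mono) auto
    then show ?thesis unfolding V0_def V_def by simp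
  qed
  ultimately have m3: "2 * \<eta> * (SF + SH) \<le> D\<^sup>2 + (norm lam)\<^sup>2 + real T * (2 * \<eta> * C0)" by linarith
  have "SF + SH \<le> D\<^sup>2 / (2 * \<eta>) + (norm lam)\<^sup>2 / (2 * \<eta>) + real T * C0"
    using m3 \<eta> by (simp add: field_simps)
  moreover have "real T * C0 = P * \<eta> * real T + 2 * B\<^sup>2 * \<eta> * real T * (norm lam)\<^sup>2"
    unfolding C0_def \<delta>_def by (simp add: algebra_simps)
  ultimately have fin: "SF + SH - (2 * B\<^sup>2 * \<eta> * real T + 1 / (2 * \<eta>)) * (norm lam)\<^sup>2 \<le> D\<^sup>2 / (2 * \<eta>) + P * \<eta> * real T"
    by (simp add: algebra_simps)
  show ?thesis using fin unfolding SF_def SH_def F1_def H1_def Z_def by simp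
qed

end


theorem lemma2:
  fixes X :: "'a::euclidean_space set"
    and M :: "'w measure" and Th :: "'b measure" and \<theta> :: "nat \<Rightarrow> 'w \<Rightarrow> 'b"
    and f :: "'a \<Rightarrow> 'b \<Rightarrow> real" and gf :: "'a \<Rightarrow> 'b \<Rightarrow> 'a"
    and h :: "'i::finite \<Rightarrow> 'a \<Rightarrow> 'b \<Rightarrow> real" and gh :: "'i \<Rightarrow> 'a \<Rightarrow> 'b \<Rightarrow> 'a"
    and \<sigma>f \<sigma>h \<sigma>l D \<sigma> \<upsilon> \<eta> \<delta> B P :: real
    and xt xstar x1 :: 'a and T :: nat and lam :: "real^'i"
  assumes X: "compact X" "convex X" "X \<noteq> {}"
    and M: "prob_space M"
    and \<theta>_meas: "\<And>t. \<theta> t \<in> measurable M Th"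
    and \<theta>_indep: "prob_space.indep_vars M (\<lambda>_. Th) \<theta> UNIV"
    and \<theta>_distr: "\<And>t. distr M Th (\<theta> t) = Th"
    and f_conv: "\<And>th. th \<in> space Th \<Longrightarrow> convex_on X (\<lambda>x. f x th)"
    and f_diff: "\<And>th x. th \<in> space Th \<Longrightarrow> x \<in> X \<Longrightarrow>
                   ((\<lambda>y. f y th) has_derivative (\<lambda>v. gf x th \<bullet> v)) (at x)"
    and h_conv: "\<And>i th. th \<in> space Th \<Longrightarrow> convex_on X (\<lambda>x. h i x th)"
    and h_diff: "\<And>i th x. th \<in> space Th \<Longrightarrow> x \<in> X \<Longrightarrow>
                   ((\<lambda>y. h i y th) has_derivative (\<lambda>v. gh i x th \<bullet> v)) (at x)"
    and f_meas: "(\<lambda>p. f (fst p) (snd p)) \<in> borel_measurable (borel \<Otimes>\<^sub>M Th)"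
    and gf_meas: "(\<lambda>p. gf (fst p) (snd p)) \<in> borel_measurable (borel \<Otimes>\<^sub>M Th)"
    and h_meas: "\<And>i. (\<lambda>p. h i (fst p) (snd p)) \<in> borel_measurable (borel \<Otimes>\<^sub>M Th)"
    and gh_meas: "\<And>i. (\<lambda>p. gh i (fst p) (snd p)) \<in> borel_measurable (borel \<Otimes>\<^sub>M Th)"
    and f_int: "\<And>x. x \<in> X \<Longrightarrow> integrable Th (f x)"
    and \<sigma>_nonneg: "\<sigma>f \<ge> 0" "\<sigma>h \<ge> 0" "\<sigma>l \<ge> 0"
    and A1f: "\<And>x. x \<in> X \<Longrightarrow> (\<integral>\<^sup>+ th. ennreal ((norm (gf x th))\<^sup>2) \<partial>Th) \<le> ennreal (\<sigma>f\<^sup>2)"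
    and A1h: "\<And>i x. x \<in> X \<Longrightarrow> (\<integral>\<^sup>+ th. ennreal ((norm (gh i x th))\<^sup>2) \<partial>Th) \<le> ennreal (\<sigma>h\<^sup>2)"
    and A2: "\<And>i x. x \<in> X \<Longrightarrow> (\<integral>\<^sup>+ th. ennreal ((h i x th)\<^sup>2) \<partial>Th) \<le> ennreal (\<sigma>l\<^sup>2)"
    and A3: "\<And>x y. x \<in> X \<Longrightarrow> y \<in> X \<Longrightarrow> dist x y \<le> D"
    and A4: "xt \<in> X" "\<sigma> > 0" "\<And>i. expfun Th (h i) xt + \<sigma> \<le> 0"
    and \<upsilon>: "0 \<le> \<upsilon>" "\<upsilon> \<le> \<sigma> / 2" "\<upsilon> < \<sigma>l"
    and B_def: "B = max \<sigma>f (\<sigma>h * sqrt (real CARD('i)))"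
    and P_def: "P = B\<^sup>2 + 4 * real CARD('i) * \<sigma>l\<^sup>2"
    and \<eta>: "\<eta> > 0" "\<eta> < 1 / (4 * B)"
    and \<delta>_def: "\<delta> = 4 * B\<^sup>2"
    and x1: "x1 \<in> X"
    and xstar: "xstar \<in> X" "\<And>i. expfun Th (h i) xstar + \<upsilon> \<le> 0"
       "\<And>x. x \<in> X \<Longrightarrow> (\<forall>i. expfun Th (h i) x + \<upsilon> \<le> 0) \<Longrightarrow> expfun Th f xstar \<le> expfun Th f x"
    and T: "T \<ge> 1"
    and lam: "\<And>i. lam $ i \<ge> 0"
  shows "(\<Sum>t<T. \<integral>\<omega>. expfun Th f (fst (csoa X gf h gh \<eta> \<delta> \<upsilon> x1 (\<lambda>k. \<theta> k \<omega>) t))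
                          - expfun Th f xstar \<partial>M)
         - (2 * B\<^sup>2 * \<eta> * real T + 1 / (2 * \<eta>)) * (norm lam)\<^sup>2
         + (\<Sum>t<T. \<integral>\<omega>. (\<Sum>i\<in>UNIV. lam $ i *
               (expfun Th (h i) (fst (csoa X gf h gh \<eta> \<delta> \<upsilon> x1 (\<lambda>k. \<theta> k \<omega>) t)) + \<upsilon>)) \<partial>M)
         \<le> D\<^sup>2 / (2 * \<eta>) + P * \<eta> * real T"
proof -
  interpret S: setting X M Th \<theta> f gf h gh \<sigma>f \<sigma>h \<sigma>l D \<upsilon> \<eta> \<delta> B P xstar x1 lam
    by (rule setting.intro) (fact assms)+
  show ?thesis by (rule S.main)
qed

end
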